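(* Let $A\in M_n(\mathbb{Z})$ be invertible such that $x\mapsto A^{-1}x$ is a similarity with respect to Euclidean distance, and let $D$ be a subset of a complete residue system mod $A$. Then the set of $\alpha\in T_{A,D-D}$ for which the box-counting dimension of $T_{A,D}\cap(T_{A,D}+\alpha)$ exists and equals $\dim_B T_{A,D}$ is dense in $T_{A,D-D}$.
   Context: A similarity means a map $f$ with $\|f(x)-f(y)\|=c\|x-y\|$ for some $c\in(0,1)$ and all $x,y$. For finite $E\subset\mathbb{R}^n$, $\pi_{A,E}((e_j)_{j\ge1})=\sum_{j\ge1}A^{-j}e_j$ for $(e_j)\in E^{\mathbb{N}}$ and $T_{A,E}=\pi_{A,E}(E^{\mathbb{N}})$. $D-D=\{a-b:a,b\in D\}$. A complete residue system mod $A$ is a set $\mathcal{D}\subset\mathbb{Z}^n$ mapping bijectively onto $\mathbb{Z}^n/A\mathbb{Z}^n$. *)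

theory Defs
  imports "HOL-Analysis.Analysis"
begin

definition real_mat :: "int^'n^'n \<Rightarrow> real^'n^'n" where
  "real_mat A = (\<chi> i j. of_int (A$i$j))"

definition real_vec :: "int^'n \<Rightarrow> real^'n" where
  "real_vec z = (\<chi> i. of_int (z$i))"

definition inv_similarity :: "int^'n^'n \<Rightarrow> bool" where
  "inv_similarity A \<longleftrightarrow> det (real_mat A) \<noteq> 0 \<and>
     (\<exists>c. 0 < c \<and> c < 1 \<and>
        (\<forall>x y. norm (matrix_inv (real_mat A) *v x - matrix_inv (real_mat A) *v y) = c * norm (x - y)))"

definition complete_residue_system :: "int^'n^'n \<Rightarrow> (int^'n) set \<Rightarrow> bool" where
  "complete_residue_system A R \<longleftrightarrow>
     (\<forall>z. \<exists>d\<in>R. \<exists>k. z - d = A *v k) \<and>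
     (\<forall>d1\<in>R. \<forall>d2\<in>R. (\<exists>k. d1 - d2 = A *v k) \<longrightarrow> d1 = d2)"

text \<open>pi_{A,E}((e_j)_{j\<ge>1}) = \<Sum>_{j\<ge>1} A^{-j} e_j ; the sequence is indexed from 0 here,
  e j standing for e_{j+1}.\<close>
definition pi_AE :: "real^'n^'n \<Rightarrow> (nat \<Rightarrow> real^'n) \<Rightarrow> real^'n" where
  "pi_AE A e = (\<Sum>j. ((\<lambda>x. matrix_inv A *v x) ^^ (Suc j)) (e j))"

definition T_AE :: "real^'n^'n \<Rightarrow> (real^'n) set \<Rightarrow> (real^'n) set" where
  "T_AE A E = {pi_AE A e | e. \<forall>j. e j \<in> E}"

definition set_minus_set :: "'a::ab_group_add set \<Rightarrow> 'a set \<Rightarrow> 'a set" where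
  "set_minus_set X Y = {a - b | a b. a \<in> X \<and> b \<in> Y}"

definition cover_number :: "real \<Rightarrow> 'a::metric_space set \<Rightarrow> nat" where
  "cover_number \<delta> F = (LEAST m. \<exists>C. finite C \<and> card C = m \<and> F \<subseteq> \<Union>C \<and> (\<forall>S\<in>C. diameter S \<le> \<delta>))"

definition has_box_dim :: "'a::metric_space set \<Rightarrow> real \<Rightarrow> bool" where
  "has_box_dim F d \<longleftrightarrow>
     ((\<lambda>\<delta>. ln (real (cover_number \<delta> F)) / (- ln \<delta>)) \<longlongrightarrow> d) (at_right 0)"

end

theory Submission
  imports Defs "HOL-Analysis.Analysis"
begin


lemma exists_pow_bracket:
  fixes c \<delta> :: real
  assumes "0 < c" "c < 1" "0 < \<delta>" "\<delta> \<le> 1"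
  shows "\<exists>k. c ^ Suc k < \<delta> \<and> \<delta> \<le> c ^ k"
proof -
  obtain n where n: "c ^ n < \<delta>" using real_arch_pow_inv[OF assms(3) assms(2)] by blast
  define j where "j = (LEAST j. c ^ j < \<delta>)"
  have j1: "c ^ j < \<delta>" unfolding j_def by (rule LeastI[of _ n]) (rule n)
  have j2: "\<And>i. i < j \<Longrightarrow> \<not> c ^ i < \<delta>" unfolding j_def using not_less_Least by blast
  have "j \<noteq> 0"
  proof
    assume "j = 0" with j1 assms(4) show False by simp
  qed
  then obtain k where "j = Suc k" using not0_implies_Suc by blast
  then show ?thesis using j1 j2[of k] by auto
qed

lemma ratio_limit_from_bound:
  fixes G :: "real \<Rightarrow> real"
  assumes "eventually (\<lambda>\<delta>. \<bar>G \<delta> - d * (- ln \<delta>)\<bar> \<le> C0) (at_right 0)"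
  shows "((\<lambda>\<delta>. G \<delta> / (- ln \<delta>)) \<longlongrightarrow> d) (at_right 0)"
proof -
  have lnt: "filterlim (\<lambda>\<delta>::real. - ln \<delta>) at_top (at_right 0)"
    using ln_at_0 by (simp add: filterlim_uminus_at_top)
  have ev1: "eventually (\<lambda>\<delta>::real. \<delta> < 1) (at_right 0)"
    by (rule eventually_at_right_field[THEN iffD2]) (rule exI[of _ 1], auto)
  have ev0: "eventually (\<lambda>\<delta>::real. 0 < \<delta>) (at_right 0)"
    by (simp add: eventually_at_right_less)
  have z: "((\<lambda>\<delta>. C0 / (- ln \<delta>)) \<longlongrightarrow> 0) (at_right (0::real))"
    by (rule tendsto_divide_0[OF tendsto_const]) (rule filterlim_at_top_imp_at_infinity[OF lnt])
  have "((\<lambda>\<delta>. (G \<delta> - d * (- ln \<delta>)) / (- ln \<delta>)) \<longlongrightarrow> 0) (at_right 0)"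
  proof (rule Lim_null_comparison[OF _ z])
    show "\<forall>\<^sub>F x in at_right 0. norm ((G x - d * - ln x) / - ln x) \<le> C0 / - ln x"
      using assms ev1 ev0
    proof eventually_elim
      case (elim x)
      then have p: "0 < - ln x" by simp
      have "\<bar>(G x - d * - ln x) / - ln x\<bar> = \<bar>G x - d * - ln x\<bar> / - ln x"
        using p by (simp add: abs_div_pos)
      also have "\<dots> \<le> C0 / - ln x" by (rule divide_right_mono[OF elim(1)]) (use p in linarith)
      finally show ?case by simp
    qed
  qed
  then have lim: "((\<lambda>\<delta>. (G \<delta> - d * (- ln \<delta>)) / (- ln \<delta>) + d) \<longlongrightarrow> 0 + d) (at_right 0)"
    by (intro tendsto_add tendsto_const)
  have ev: "eventually (\<lambda>\<delta>. (G \<delta> - d * (- ln \<delta>)) / (- ln \<delta>) + d = G \<delta> / (- ln \<delta>)) (at_right 0)"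
    using ev1 ev0
  proof eventually_elim
    case (elim x)
    then have p: "0 < - ln x" by simp
    then have "- ln x \<noteq> 0" by linarith
    then show ?case by (simp add: field_simps)
  qed
  show ?thesis using lim tendsto_cong[OF ev] by simp
qed

lemma lin_aux:
  fixes X Y ka pa a K1 KK :: real
  assumes "ka \<le> K1 + X" "X \<le> pa + ka" "ka \<le> Y" "Y \<le> ka + a" "0 \<le> a" "- KK \<le> K1" "K1 \<le> KK" "0 \<le> pa"
  shows "\<bar>X - Y\<bar> \<le> pa + KK + a"
  using assms by linarith

lemma box_lim:
  fixes N :: "real \<Rightarrow> nat" and a c K L :: real and m :: nat
  assumes c0: "0 < c" and c1: "c < 1" and a1: "1 \<le> a" and K0: "0 < K" and L0: "0 < L"
    and mono: "\<And>\<delta>1 \<delta>2. 0 < \<delta>1 \<Longrightarrow> \<delta>1 \<le> \<delta>2 \<Longrightarrow> N \<delta>2 \<le> N \<delta>1"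
    and low: "\<And>k. m \<le> k \<Longrightarrow> a ^ k \<le> K * real (N (c ^ k))"
    and up: "\<And>k. real (N (L * c ^ k)) \<le> a ^ k"
  shows "((\<lambda>\<delta>. ln (real (N \<delta>)) / (- ln \<delta>)) \<longlongrightarrow> ln a / (- ln c)) (at_right 0)"
proof -
  obtain p where p: "c ^ p < c / L" using real_arch_pow_inv[of "c / L" c] c0 c1 L0 by auto
  define d where "d = ln a / (- ln c)"
  have lnc: "ln c < 0" using c0 c1 by simp
  have lna: "0 \<le> ln a" using a1 by simp
  have d0: "0 \<le> d" unfolding d_def using lnc lna by (intro divide_nonneg_pos) auto
  have dk: "\<And>r::real. d * (r * (- ln c)) = r * ln a" unfolding d_def using lnc by (simp add: field_simps)
  have cm0: "0 < c ^ m" using c0 by simp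
  have ev: "eventually (\<lambda>\<delta>. \<bar>ln (real (N \<delta>)) - d * (- ln \<delta>)\<bar> \<le> p * ln a + \<bar>ln K\<bar> + ln a) (at_right 0)"
    unfolding eventually_at_right_field
  proof (rule exI[of _ "c ^ m"], intro conjI allI impI)
    show "(0::real) < c ^ m" by (rule cm0)
    fix \<delta> :: real assume h: "0 < \<delta>" "\<delta> < c ^ m"
    have "c ^ m \<le> 1" using c0 c1 by (simp add: power_le_one)
    then obtain k where k: "c ^ Suc k < \<delta>" "\<delta> \<le> c ^ k"
      using exists_pow_bracket[OF c0 c1 h(1)] h(2) by force
    have km: "m \<le> k"
    proof (rule ccontr)
      assume "\<not> m \<le> k"
      then have "Suc k \<le> m" by simp
      then have "c ^ m \<le> c ^ Suc k" using c0 c1 by (intro power_decreasing) auto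
      then show False using k h by simp
    qed
    have lowN: "a ^ k \<le> K * real (N \<delta>)"
    proof -
      have "N (c ^ k) \<le> N \<delta>" using mono[OF h(1) k(2)] .
      then have "K * real (N (c ^ k)) \<le> K * real (N \<delta>)" using K0 by simp
      then show ?thesis using low[OF km] by linarith
    qed
    have upN: "real (N \<delta>) \<le> a ^ (p + k)"
    proof -
      have "L * c ^ (p + k) = (L * c ^ p) * c ^ k" by (simp add: power_add)
      also have "\<dots> < c * c ^ k"
      proof -
        have "L * c ^ p < c" using p L0 by (simp add: field_simps)
        then show ?thesis using c0 by simp
      qed
      finally have "L * c ^ (p + k) < \<delta>" using k by simp
      moreover have "0 < L * c ^ (p + k)" using L0 c0 by simp
      ultimately have "N \<delta> \<le> N (L * c ^ (p + k))" using mono by simp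
      then show ?thesis using up[of "p + k"] by linarith
    qed
    have apos: "0 < a ^ k" using a1 by simp
    have Npos: "0 < real (N \<delta>)"
    proof -
      have "0 < K * real (N \<delta>)" using lowN apos by linarith
      then show ?thesis using K0 by (simp add: zero_less_mult_iff)
    qed
    have l1: "real k * ln a \<le> ln K + ln (real (N \<delta>))"
    proof -
      have "ln (a ^ k) \<le> ln (K * real (N \<delta>))" using lowN apos by simp
      then show ?thesis using K0 Npos a1 by (simp add: ln_mult ln_realpow)
    qed
    have l2: "ln (real (N \<delta>)) \<le> real (p + k) * ln a"
    proof -
      have "ln (real (N \<delta>)) \<le> ln (a ^ (p + k))" using upN Npos by simp
      then show ?thesis using a1 by (simp add: ln_realpow)
    qed
    have l3: "real (Suc k) * ln c < ln \<delta>"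
    proof -
      have "ln (c ^ Suc k) < ln \<delta>" using k(1) c0 h(1) by simp
      then show ?thesis using c0 by (simp add: ln_realpow del: power_Suc)
    qed
    have l4: "ln \<delta> \<le> real k * ln c"
    proof -
      have "ln \<delta> \<le> ln (c ^ k)" using k(2) c0 h(1) by simp
      then show ?thesis using c0 by (simp add: ln_realpow)
    qed
    have m1: "d * (real k * (- ln c)) \<le> d * (- ln \<delta>)"
      using l4 d0 by (intro mult_left_mono) auto
    have m2: "d * (- ln \<delta>) \<le> d * (real (Suc k) * (- ln c))"
      using l3 d0 by (intro mult_left_mono) auto
    have e1: "real (Suc k) * ln a = real k * ln a + ln a" by (simp add: algebra_simps)
    have e2: "real (p + k) * ln a = real p * ln a + real k * ln a" by (simp add: algebra_simps)
    have m1': "real k * ln a \<le> d * (- ln \<delta>)" using m1 unfolding dk .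
    have m2': "d * (- ln \<delta>) \<le> real k * ln a + ln a" using m2 unfolding dk e1 .
    have l2': "ln (real (N \<delta>)) \<le> real p * ln a + real k * ln a" using l2 unfolding e2 .
    show "\<bar>ln (real (N \<delta>)) - d * (- ln \<delta>)\<bar> \<le> real p * ln a + \<bar>ln K\<bar> + ln a"
      by (rule lin_aux[OF l1 l2' m1' m2' lna]) (use lna in auto)
  qed
  show ?thesis using ratio_limit_from_bound[OF ev] unfolding d_def .
qed



lemma rv_add: "real_vec (x + y) = real_vec x + real_vec y"
  by (simp add: real_vec_def vec_eq_iff)
lemma rv_diff: "real_vec (x - y) = real_vec x - real_vec y"
  by (simp add: real_vec_def vec_eq_iff)
lemma rv_0: "real_vec 0 = 0"
  by (simp add: real_vec_def vec_eq_iff)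
lemma rv_inj: "real_vec x = real_vec y \<Longrightarrow> x = y"
  by (simp add: real_vec_def vec_eq_iff)
lemma rv_mult: "real_mat A *v real_vec z = real_vec (A *v z)"
  by (simp add: real_vec_def real_mat_def vec_eq_iff matrix_vector_mult_def)
lemma rv_nth: "real_vec z $ i = of_int (z $ i)"
  by (simp add: real_vec_def)

lemma fin_ball: "finite {z::int^'n. norm (real_vec z) \<le> \<rho>}"
proof -
  define N where "N = ceiling \<rho>"
  have "{z::int^'n. norm (real_vec z) \<le> \<rho>} \<subseteq> vec_lambda ` (PiE UNIV (\<lambda>_. {-N..N}))"
  proof
    fix z :: "int^'n" assume "z \<in> {z. norm (real_vec z) \<le> \<rho>}"
    then have h: "norm (real_vec z) \<le> \<rho>" by simp
    have "\<And>i. \<bar>z $ i\<bar> \<le> N"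
    proof -
      fix i
      have "\<bar>real_vec z $ i\<bar> \<le> \<rho>" using component_le_norm_cart[of "real_vec z" i] h by linarith
      then have "real_of_int \<bar>z $ i\<bar> \<le> \<rho>" by (simp add: rv_nth)
      then show "\<bar>z $ i\<bar> \<le> N" unfolding N_def by (simp add: le_ceiling_iff)
    qed
    then have "\<And>i. z $ i \<in> {-N..N}" by (metis abs_le_D1 abs_le_D2 atLeastAtMost_iff minus_le_iff)
    then have "vec_nth z \<in> PiE UNIV (\<lambda>_. {-N..N})" by auto
    then show "z \<in> vec_lambda ` (PiE UNIV (\<lambda>_. {-N..N}))"
      by (metis image_eqI vec_nth_inverse)
  qed
  moreover have "finite (vec_lambda ` (PiE UNIV (\<lambda>_. {-N..N})) :: (int^'n) set)"
    by (intro finite_imageI finite_PiE) auto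
  ultimately show ?thesis by (rule finite_subset)
qed

primrec Zs :: "int^'n^'n \<Rightarrow> nat \<Rightarrow> (nat \<Rightarrow> int^'n) \<Rightarrow> int^'n" where
  "Zs A 0 d = 0"
| "Zs A (Suc k) d = A *v Zs A k d + d k"

definition cover_ok :: "real \<Rightarrow> 'a::metric_space set \<Rightarrow> 'a set set \<Rightarrow> bool" where
  "cover_ok \<delta> F C \<longleftrightarrow> finite C \<and> F \<subseteq> \<Union>C \<and> (\<forall>S\<in>C. diameter S \<le> \<delta>)"

lemma cover_number_le: "cover_ok \<delta> F C \<Longrightarrow> cover_number \<delta> F \<le> card C"
  unfolding cover_number_def cover_ok_def by (rule Least_le) auto

lemma cover_number_wit:
  assumes "cover_ok \<delta> F C0"
  obtains C where "cover_ok \<delta> F C" "card C = cover_number \<delta> F"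
proof -
  have "\<exists>C. finite C \<and> card C = cover_number \<delta> F \<and> F \<subseteq> \<Union>C \<and> (\<forall>S\<in>C. diameter S \<le> \<delta>)"
    unfolding cover_number_def
    by (rule LeastI[of _ "card C0"]) (use assms in \<open>auto simp: cover_ok_def\<close>)
  then show ?thesis using that unfolding cover_ok_def by blast
qed

lemma cover_number_mono:
  assumes "cover_ok \<delta>1 F C0" "\<delta>1 \<le> \<delta>2"
  shows "cover_number \<delta>2 F \<le> cover_number \<delta>1 F"
proof -
  obtain C where C: "cover_ok \<delta>1 F C" "card C = cover_number \<delta>1 F" using cover_number_wit[OF assms(1)] .
  then have "cover_ok \<delta>2 F C" using assms(2) unfolding cover_ok_def by force
  then show ?thesis using cover_number_le C(2) by metis
qed

lemma unbounded_diameter: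
  fixes X :: "'a::metric_space set"
  assumes "X \<noteq> {}" "\<not> bounded X"
  shows "diameter X = Sup (UNIV :: real set)"
proof -
  have nb: "\<not> bdd_above (case_prod dist ` (X \<times> X))"
  proof
    assume "bdd_above (case_prod dist ` (X \<times> X))"
    then obtain b where b: "\<And>x y. x \<in> X \<Longrightarrow> y \<in> X \<Longrightarrow> dist x y \<le> b"
      unfolding bdd_above_def by fastforce
    obtain x0 where "x0 \<in> X" using assms(1) by blast
    then have "bounded X" unfolding bounded_def using b by blast
    then show False using assms(2) by simp
  qed
  have e: "(\<lambda>z. \<forall>x\<in>case_prod dist ` (X \<times> X). x \<le> z) = (\<lambda>z::real. \<forall>x\<in>UNIV. x \<le> z)"
  proof (rule ext)
    fix z :: real
    have "\<not> (\<forall>x\<in>case_prod dist ` (X \<times> X). x \<le> z)" using nb unfolding bdd_above_def by blast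
    moreover have "\<not> (\<forall>x\<in>(UNIV::real set). x \<le> z)"
    proof
      assume "\<forall>x\<in>(UNIV::real set). x \<le> z"
      then have "z + 1 \<le> z" by blast
      then show False by simp
    qed
    ultimately show "(\<forall>x\<in>case_prod dist ` (X \<times> X). x \<le> z) = (\<forall>x\<in>UNIV. x \<le> z)" by blast
  qed
  show ?thesis using assms(1) unfolding diameter_def Sup_real_def e by simp
qed



locale setting =
  fixes A :: "int^'n^'n" and D R :: "(int^'n) set" and c :: real
  assumes c0: "0 < c" and c1: "c < 1"
    and iso: "\<And>x y. norm (matrix_inv (real_mat A) *v x - matrix_inv (real_mat A) *v y) = c * norm (x - y)"
    and detA: "det (real_mat A) \<noteq> 0"
    and crs: "complete_residue_system A R" and DR: "D \<subseteq> R"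
begin

abbreviation "B \<equiv> real_mat A"
definition f :: "real^'n \<Rightarrow> real^'n" where "f x = matrix_inv B *v x"
definition g :: "real^'n \<Rightarrow> real^'n" where "g x = B *v x"
abbreviation "fp k \<equiv> f ^^ k"
abbreviation "gp k \<equiv> g ^^ k"

lemma inv_both: "B ** matrix_inv B = mat 1 \<and> matrix_inv B ** B = mat 1"
proof -
  have "invertible B" using detA invertible_det_nz by blast
  then show ?thesis unfolding invertible_def matrix_inv_def by (rule someI_ex)
qed

lemma gf[simp]: "g (f x) = x"
  unfolding f_def g_def using inv_both by (simp add: matrix_vector_mul_assoc)
lemma fg[simp]: "f (g x) = x"
  unfolding f_def g_def using inv_both by (simp add: matrix_vector_mul_assoc)

lemma f_add: "f (x + y) = f x + f y" unfolding f_def by (simp add: matrix_vector_right_distrib)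
lemma f_diff: "f (x - y) = f x - f y" unfolding f_def by (simp add: matrix_vector_mult_diff_distrib)
lemma f_0[simp]: "f 0 = 0" unfolding f_def by simp
lemma g_add: "g (x + y) = g x + g y" unfolding g_def by (simp add: matrix_vector_right_distrib)
lemma norm_f: "norm (f x) = c * norm x"
  using iso[of x 0] unfolding f_def by simp
lemma f_bl: "bounded_linear f"
proof -
  have "f = (*v) (matrix_inv B)" unfolding f_def by (rule ext) simp
  then show ?thesis by simp
qed

lemma fp_bl: "bounded_linear (fp k)"
proof (induction k)
  case 0 then show ?case by (simp add: bounded_linear_ident[unfolded id_def])
next
  case (Suc k) then show ?case
    using bounded_linear_compose[OF f_bl Suc] by (simp add: o_def)
qed

lemma fp_add: "fp k (x + y) = fp k x + fp k y"
  by (induction k) (auto simp: f_add)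
lemma fp_diff: "fp k (x - y) = fp k x - fp k y"
  by (induction k) (auto simp: f_diff)
lemma fp_0[simp]: "fp k 0 = 0"
  by (induction k) auto
lemma norm_fp: "norm (fp k x) = c ^ k * norm x"
  by (induction k) (auto simp: norm_f)
lemma gp_add: "gp k (x + y) = gp k x + gp k y"
  by (induction k) (auto simp: g_add)
lemma gp_fp[simp]: "gp k (fp k x) = x"
proof (induction k arbitrary: x)
  case 0 then show ?case by simp
next
  case (Suc k)
  have "gp (Suc k) (fp (Suc k) x) = gp k (g (fp (Suc k) x))"
    by (simp only: funpow_Suc_right o_apply)
  also have "\<dots> = gp k (fp k x)" by simp
  finally show ?case using Suc by simp
qed
lemma fp_gp[simp]: "fp k (gp k x) = x"
proof (induction k arbitrary: x)
  case 0 then show ?case by simp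
next
  case (Suc k)
  have "fp (Suc k) (gp (Suc k) x) = fp k (f (gp (Suc k) x))"
    by (simp only: funpow_Suc_right o_apply)
  also have "\<dots> = fp k (gp k x)" by simp
  finally show ?case using Suc by simp
qed
lemma norm_gp_diff: "norm (x - y) = c ^ k * norm (gp k x - gp k y)"
proof -
  have "norm (x - y) = norm (fp k (gp k x) - fp k (gp k y))" by simp
  also have "\<dots> = norm (fp k (gp k x - gp k y))" by (simp add: fp_diff)
  finally show ?thesis by (simp add: norm_fp)
qed
lemma norm_g: "norm (g x) = norm x / c"
  using norm_f[of "g x"] c0 by (simp add: field_simps)

lemma g_rv: "g (real_vec z) = real_vec (A *v z)"
  unfolding g_def by (rule rv_mult)

lemma A_inj: "A *v x = A *v y \<Longrightarrow> x = y"
proof -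
  assume "A *v x = A *v y"
  then have "g (real_vec x) = g (real_vec y)" by (simp add: g_rv)
  then have "f (g (real_vec x)) = f (g (real_vec y))" by simp
  then show "x = y" using rv_inj by simp
qed

end


context setting begin

lemma g_diff: "g (x - y) = g x - g y" unfolding g_def by (simp add: matrix_vector_mult_diff_distrib)

lemma geo_summable: "summable (\<lambda>j. b * c ^ j)"
  using c0 c1 by (intro summable_mult summable_geometric) simp

lemma geo_suminf: "(\<Sum>j. b * c ^ j) = b / (1 - c)"
  using c0 c1 by (simp add: suminf_mult suminf_geometric)

lemma pi_term_le:
  assumes "\<And>j. norm (e j) \<le> b"
  shows "norm (fp (Suc j) (e j)) \<le> b * c ^ j"
proof -
  have "norm (fp (Suc j) (e j)) = c ^ Suc j * norm (e j)" by (rule norm_fp)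
  also have "\<dots> \<le> c ^ j * norm (e j)"
    using c0 c1 by (intro mult_right_mono) (auto simp: power_decreasing)
  also have "\<dots> \<le> c ^ j * b" using assms[of j] c0 by (intro mult_left_mono) auto
  finally show ?thesis by (simp add: mult.commute)
qed

lemma pi_summ:
  assumes "\<And>j. norm (e j) \<le> b"
  shows "summable (\<lambda>j. fp (Suc j) (e j))"
  by (rule summable_comparison_test'[OF geo_summable[of b], of 0]) (use pi_term_le[of e b, OF assms] in auto)

lemma pi_norm:
  assumes "\<And>j. norm (e j) \<le> b"
  shows "norm (pi_AE B e) \<le> b / (1 - c)"
  unfolding pi_AE_def f_def[symmetric]
  using norm_suminf_le[of "\<lambda>j. fp (Suc j) (e j)" "\<lambda>j. b * c ^ j", OF pi_term_le[of e b, OF assms] geo_summable]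
  by (simp add: geo_suminf)

lemma pi_AE_f: "pi_AE B e = (\<Sum>j. fp (Suc j) (e j))"
  unfolding pi_AE_def f_def[symmetric] by simp

lemma pi_shift:
  assumes "\<And>j. norm (e j) \<le> b"
  shows "pi_AE B e = (\<Sum>j<k. fp (Suc j) (e j)) + fp k (pi_AE B (\<lambda>j. e (j + k)))"
proof -
  have s: "summable (\<lambda>j. fp (Suc j) (e j))" by (rule pi_summ[OF assms])
  have s2: "summable (\<lambda>j. fp (Suc j) (e (j + k)))" by (rule pi_summ) (rule assms)
  have "pi_AE B e = (\<Sum>j. fp (Suc (j + k)) (e (j + k))) + (\<Sum>j<k. fp (Suc j) (e j))"
    unfolding pi_AE_f using suminf_split_initial_segment[OF s, of k] by simp
  also have "(\<Sum>j. fp (Suc (j + k)) (e (j + k))) = (\<Sum>j. fp k (fp (Suc j) (e (j + k))))"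
  proof -
    have "\<And>j. fp (Suc (j + k)) = fp k \<circ> fp (Suc j)"
      by (metis add.commute add_Suc_right funpow_add)
    then show ?thesis by simp
  qed
  also have "\<dots> = fp k (\<Sum>j. fp (Suc j) (e (j + k)))"
    using bounded_linear.suminf[OF fp_bl s2] by simp
  finally show ?thesis unfolding pi_AE_f by simp
qed

lemma pi_diff:
  assumes "\<And>j. norm (e j) \<le> b" "\<And>j. norm (e' j) \<le> b'"
  shows "pi_AE B e - pi_AE B e' = pi_AE B (\<lambda>j. e j - e' j)"
proof -
  have "(\<Sum>j. fp (Suc j) (e j)) - (\<Sum>j. fp (Suc j) (e' j)) = (\<Sum>j. fp (Suc j) (e j) - fp (Suc j) (e' j))"
    by (rule suminf_diff[OF pi_summ[of e b, OF assms(1)] pi_summ[of e' b', OF assms(2)]])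
  also have "\<dots> = (\<Sum>j. fp (Suc j) (e j - e' j))" by (simp only: fp_diff)
  finally show ?thesis unfolding pi_AE_f .
qed

lemma pi_zero: "pi_AE B (\<lambda>j. 0) = 0"
  unfolding pi_AE_f by simp

lemma R_fin: "finite R"
proof -
  define rep where "rep z = z - A *v (\<chi> i. floor (f (real_vec z) $ i))" for z
  have cong: "\<exists>k. z - rep z = A *v k" for z unfolding rep_def by auto
  have bnd: "norm (real_vec (rep z)) \<le> real CARD('n) / c" for z
  proof -
    define k :: "int^'n" where "k = (\<chi> i. floor (f (real_vec z) $ i))"
    define \<theta> where "\<theta> = f (real_vec z) - real_vec k"
    have "real_vec (rep z) = real_vec z - g (real_vec k)"
      unfolding rep_def k_def[symmetric] by (simp add: rv_diff g_rv)
    also have "\<dots> = g \<theta>" unfolding \<theta>_def by (simp add: g_diff)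
    finally have e: "real_vec (rep z) = g \<theta>" .
    have "\<And>i. \<bar>\<theta> $ i\<bar> \<le> 1"
    proof -
      fix i
      have "\<theta> $ i = f (real_vec z) $ i - of_int (floor (f (real_vec z) $ i))"
        unfolding \<theta>_def k_def by (simp add: rv_nth)
      then show "\<bar>\<theta> $ i\<bar> \<le> 1" by linarith
    qed
    then have "norm \<theta> \<le> real CARD('n)"
      using norm_le_l1_cart[of \<theta>] sum_bounded_above[of UNIV "\<lambda>i. \<bar>\<theta> $ i\<bar>" 1] by simp
    then show ?thesis unfolding e norm_g using c0 by (simp add: divide_right_mono)
  qed
  have inj: "inj_on rep R"
  proof (rule inj_onI)
    fix x y assume xy: "x \<in> R" "y \<in> R" "rep x = rep y"
    obtain k1 where k1: "x - rep x = A *v k1" using cong by blast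
    obtain k2 where k2: "y - rep y = A *v k2" using cong by blast
    have "x - y = A *v (k1 - k2)" using k1 k2 xy(3) by (simp add: matrix_vector_mult_diff_distrib algebra_simps)
    then show "x = y" using crs xy(1,2) unfolding complete_residue_system_def by blast
  qed
  show ?thesis
    by (rule inj_on_finite[OF inj _ fin_ball[of "real CARD('n) / c"]]) (use bnd in auto)
qed

lemma D_fin: "finite D" using R_fin DR finite_subset by blast

end


context setting begin

abbreviation "T \<equiv> T_AE B (real_vec ` D)"
definition "bD = (\<Sum>x\<in>real_vec ` D. norm x)"
definition "Mlim = bD / (1 - c)"
definition P :: "nat \<Rightarrow> (nat \<Rightarrow> int^'n) \<Rightarrow> real^'n" where "P k d = (\<Sum>j<k. fp (Suc j) (real_vec (d j)))"
definition W :: "nat \<Rightarrow> (nat \<Rightarrow> int^'n) set" where "W k = PiE {..<k} (\<lambda>_. D)"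

lemma dig_bound: "y \<in> D \<Longrightarrow> norm (real_vec y) \<le> bD"
  unfolding bD_def using D_fin by (intro member_le_sum) auto

lemma bD_nonneg: "0 \<le> bD" unfolding bD_def by (simp add: sum_nonneg)
lemma Mlim_nonneg: "0 \<le> Mlim" unfolding Mlim_def using bD_nonneg c1 by simp

lemma T_mem: "(\<And>j. d j \<in> D) \<Longrightarrow> pi_AE B (\<lambda>j. real_vec (d j)) \<in> T"
  unfolding T_AE_def by blast

lemma T_elim:
  assumes "x \<in> T"
  obtains d where "\<And>j. d j \<in> D" "x = pi_AE B (\<lambda>j. real_vec (d j))"
proof -
  obtain e where e: "x = pi_AE B e" "\<forall>j. e j \<in> real_vec ` D" using assms unfolding T_AE_def by blast
  then have "\<forall>j. \<exists>y. y \<in> D \<and> e j = real_vec y" by blast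
  then obtain d where d: "\<forall>j. d j \<in> D \<and> e j = real_vec (d j)" by metis
  then have "e = (\<lambda>j. real_vec (d j))" by auto
  then have "x = pi_AE B (\<lambda>j. real_vec (d j))" using e(1) by simp
  then show ?thesis using d by (intro that[of d]) auto
qed

lemma T_norm: "x \<in> T \<Longrightarrow> norm x \<le> Mlim"
  by (erule T_elim) (simp add: Mlim_def pi_norm dig_bound)

lemma T_shift:
  assumes "\<And>j. d j \<in> D"
  shows "pi_AE B (\<lambda>j. real_vec (d j)) = P k d + fp k (pi_AE B (\<lambda>j. real_vec (d (j + k))))"
  unfolding P_def by (rule pi_shift) (rule dig_bound[OF assms])

lemma P_cong: "(\<And>j. j < k \<Longrightarrow> d j = d' j) \<Longrightarrow> P k d = P k d'"
  unfolding P_def by (intro sum.cong) auto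

lemma T_decomp:
  assumes "x \<in> T"
  shows "\<exists>w\<in>W k. \<exists>t\<in>T. x = P k w + fp k t"
proof -
  obtain d where d: "\<And>j. d j \<in> D" "x = pi_AE B (\<lambda>j. real_vec (d j))" using T_elim[OF assms] by blast
  have "restrict d {..<k} \<in> W k" unfolding W_def using d(1) by (simp add: restrict_PiE_iff)
  moreover have "P k (restrict d {..<k}) = P k d" by (rule P_cong) simp
  moreover have "pi_AE B (\<lambda>j. real_vec (d (j + k))) \<in> T" using d(1) by (intro T_mem)
  ultimately show ?thesis using T_shift[of d k, OF d(1)] d(2) by metis
qed

lemma W_fin: "finite (W k)" unfolding W_def using D_fin by (intro finite_PiE) auto
lemma W_card: "card (W k) = card D ^ k" unfolding W_def by (simp add: card_PiE)

lemma gp_P: "gp k (P k d) = real_vec (Zs A k d)"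
proof (induction k)
  case 0 then show ?case by (simp add: P_def rv_0)
next
  case (Suc k)
  have "P (Suc k) d = P k d + fp (Suc k) (real_vec (d k))" unfolding P_def by simp
  then have "gp (Suc k) (P (Suc k) d) = gp (Suc k) (P k d) + real_vec (d k)"
    by (simp only: gp_add gp_fp)
  also have "gp (Suc k) (P k d) = g (gp k (P k d))" by simp
  finally show ?case using Suc by (simp add: g_rv rv_add)
qed

lemma Z_inj:
  "(\<And>j. j < k \<Longrightarrow> d j \<in> R) \<Longrightarrow> (\<And>j. j < k \<Longrightarrow> d' j \<in> R) \<Longrightarrow> Zs A k d = Zs A k d' \<Longrightarrow> j < k \<Longrightarrow> d j = d' j"
proof (induction k arbitrary: j)
  case 0 then show ?case by simp
next
  case (Suc k)
  have e: "A *v Zs A k d + d k = A *v Zs A k d' + d' k" using Suc.prems(3) by simp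
  then have "d k - d' k = A *v (Zs A k d' - Zs A k d)"
    by (simp add: matrix_vector_mult_diff_distrib algebra_simps)
  then have dk: "d k = d' k" using crs Suc.prems(1,2)[of k] unfolding complete_residue_system_def by blast
  then have "A *v Zs A k d = A *v Zs A k d'" using e by simp
  then have "Zs A k d = Zs A k d'" by (rule A_inj)
  then have "\<And>i. i < k \<Longrightarrow> d i = d' i" using Suc.IH Suc.prems(1,2) by simp
  then show ?case using dk Suc.prems(4) less_Suc_eq by auto
qed

definition "Lc = 2 * Mlim + 1"
lemma Lc_pos: "0 < Lc" unfolding Lc_def using Mlim_nonneg by simp

lemma upper_cover:
  assumes "S \<subseteq> T"
  shows "\<exists>C. cover_ok (Lc * c ^ k) S C \<and> card C \<le> card D ^ k"
proof -
  define C where "C = (\<lambda>w. (\<lambda>t. P k w + fp k t) ` T) ` W k"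
  have "finite C" unfolding C_def using W_fin by simp
  moreover have "S \<subseteq> \<Union>C"
  proof
    fix x assume "x \<in> S"
    then have "x \<in> T" using assms by blast
    then obtain w t where "w \<in> W k" "t \<in> T" "x = P k w + fp k t" using T_decomp by blast
    then show "x \<in> \<Union>C" unfolding C_def by blast
  qed
  moreover have "\<forall>X\<in>C. diameter X \<le> Lc * c ^ k"
  proof
    fix X assume "X \<in> C"
    then obtain w where X: "X = (\<lambda>t. P k w + fp k t) ` T" unfolding C_def by blast
    show "diameter X \<le> Lc * c ^ k"
    proof (rule diameter_le)
      show "X \<noteq> {} \<or> 0 \<le> Lc * c ^ k" using Lc_pos c0 by simp
      fix x y assume "x \<in> X" "y \<in> X"
      then obtain t s where ts: "t \<in> T" "s \<in> T" "x = P k w + fp k t" "y = P k w + fp k s" using X by blast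
      have "norm (x - y) = c ^ k * norm (t - s)" using ts by (simp add: norm_fp fp_diff[symmetric])
      also have "\<dots> \<le> c ^ k * (2 * Mlim)"
      proof -
        have "norm (t - s) \<le> norm t + norm s" by (rule norm_triangle_ineq4)
        then have "norm (t - s) \<le> 2 * Mlim" using T_norm[OF ts(1)] T_norm[OF ts(2)] by linarith
        then show ?thesis using c0 by (intro mult_left_mono) auto
      qed
      also have "\<dots> \<le> Lc * c ^ k" unfolding Lc_def using c0 by (simp add: algebra_simps)
      finally show "norm (x - y) \<le> Lc * c ^ k" .
    qed
  qed
  moreover have "card C \<le> card D ^ k" unfolding C_def using card_image_le[OF W_fin] W_card by metis
  ultimately show ?thesis unfolding cover_ok_def by blast
qed

lemma cover_exists:
  assumes "S \<subseteq> T" "0 < \<delta>"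
  shows "\<exists>C. cover_ok \<delta> S C"
proof -
  obtain k where k: "c ^ k < \<delta> / Lc" using real_arch_pow_inv[of "\<delta> / Lc" c] assms(2) Lc_pos c1 by auto
  then have "Lc * c ^ k \<le> \<delta>" using Lc_pos by (simp add: field_simps)
  moreover obtain C where "cover_ok (Lc * c ^ k) S C" using upper_cover[OF assms(1)] by blast
  ultimately have "cover_ok \<delta> S C" unfolding cover_ok_def by force
  then show ?thesis by blast
qed

lemma upper_bound: "S \<subseteq> T \<Longrightarrow> cover_number (Lc * c ^ k) S \<le> card D ^ k"
  using upper_cover cover_number_le order_trans by metis

end


context setting begin

lemma count_lemma:
  fixes \<phi> :: "'v \<Rightarrow> real^'n" and \<zeta> :: "'v \<Rightarrow> int^'n"
  assumes cov: "cover_ok (c ^ k) S C" and bdd: "\<forall>X\<in>C. bounded X" and finV: "finite V"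
    and inj: "inj_on \<zeta> V" and inS: "\<forall>v\<in>V. \<phi> v \<in> S"
    and close: "\<forall>v\<in>V. norm (gp k (\<phi> v) - real_vec (\<zeta> v)) \<le> M"
  shows "card V \<le> card {z::int^'n. norm (real_vec z) \<le> 2 * M + 1} * card C"
proof -
  define Ball0 where "Ball0 = {z::int^'n. norm (real_vec z) \<le> 2 * M + 1}"
  have finC: "finite C" and covS: "S \<subseteq> \<Union>C" and diam: "\<forall>X\<in>C. diameter X \<le> c ^ k"
    using cov unfolding cover_ok_def by auto
  have "\<forall>v\<in>V. \<exists>X. X \<in> C \<and> \<phi> v \<in> X" using inS covS by blast
  then obtain h where h: "\<forall>v\<in>V. h v \<in> C \<and> \<phi> v \<in> h v" by metis
  have sub: "V \<subseteq> (\<Union>X\<in>C. {v\<in>V. h v = X})" using h by blast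
  have each: "card {v\<in>V. h v = X} \<le> card Ball0" if X: "X \<in> C" for X
  proof (cases "{v\<in>V. h v = X} = {}")
    case True then show ?thesis by (simp only: card.empty)
  next
    case False
    then obtain v0 where v0: "v0 \<in> V" "h v0 = X" by blast
    have "\<zeta> ` {v\<in>V. h v = X} \<subseteq> (\<lambda>z. z + \<zeta> v0) ` Ball0"
    proof
      fix y assume "y \<in> \<zeta> ` {v\<in>V. h v = X}"
      then obtain v where v: "v \<in> V" "h v = X" "y = \<zeta> v" by blast
      have inX: "\<phi> v \<in> X" "\<phi> v0 \<in> X" using h v v0 by auto
      have "dist (\<phi> v) (\<phi> v0) \<le> diameter X"
        by (rule diameter_bounded_bound) (use bdd X inX in auto)
      moreover have "diameter X \<le> c ^ k" using diam X by blast
      ultimately have n1: "norm (\<phi> v - \<phi> v0) \<le> c ^ k" by (simp add: dist_norm)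
      have n2: "norm (gp k (\<phi> v) - gp k (\<phi> v0)) \<le> 1"
      proof -
        have "c ^ k * norm (gp k (\<phi> v) - gp k (\<phi> v0)) \<le> c ^ k * 1"
          using n1 norm_gp_diff[of "\<phi> v" "\<phi> v0" k] by simp
        then show ?thesis using c0 by simp
      qed
      have n3: "norm (real_vec (\<zeta> v) - gp k (\<phi> v)) \<le> M"
        using close v(1) by (simp add: norm_minus_commute)
      have n4: "norm (gp k (\<phi> v0) - real_vec (\<zeta> v0)) \<le> M" using close v0(1) by simp
      have "norm (real_vec (\<zeta> v) - gp k (\<phi> v0)) \<le> M + 1"
        by (rule norm_diff_triangle_le[OF n3 n2])
      then have "norm (real_vec (\<zeta> v) - real_vec (\<zeta> v0)) \<le> M + 1 + M"
        by (rule norm_diff_triangle_le[OF _ n4])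
      then have "\<zeta> v - \<zeta> v0 \<in> Ball0" unfolding Ball0_def by (simp add: rv_diff)
      moreover have "y = (\<zeta> v - \<zeta> v0) + \<zeta> v0" using v by simp
      ultimately show "y \<in> (\<lambda>z. z + \<zeta> v0) ` Ball0" by blast
    qed
    then have "card (\<zeta> ` {v\<in>V. h v = X}) \<le> card ((\<lambda>z. z + \<zeta> v0) ` Ball0)"
      by (intro card_mono finite_imageI) (auto simp: Ball0_def fin_ball)
    also have "\<dots> \<le> card Ball0" by (rule card_image_le) (simp add: Ball0_def fin_ball)
    finally show ?thesis
      using card_image[OF inj_on_subset[OF inj, of "{v\<in>V. h v = X}"]] by auto
  qed
  have "card V \<le> card (\<Union>X\<in>C. {v\<in>V. h v = X})"
    by (rule card_mono[OF _ sub]) (use finV finC in auto)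
  also have "\<dots> \<le> (\<Sum>X\<in>C. card {v\<in>V. h v = X})" by (rule card_UN_le[OF finC])
  also have "\<dots> \<le> (\<Sum>X\<in>C. card Ball0)" by (rule sum_mono) (rule each)
  also have "\<dots> = card Ball0 * card C" by simp
  finally show ?thesis unfolding Ball0_def .
qed

end


lemma box_trivial:
  assumes "Sup (UNIV::real set) \<le> 0"
  shows "has_box_dim (F :: (real^'n) set) 0"
proof -
  have ev: "eventually (\<lambda>\<delta>. ln (real (cover_number \<delta> F)) / (- ln \<delta>) = 0) (at_right (0::real))"
    using eventually_at_right_less[of "0::real"]
  proof eventually_elim
    case (elim \<delta>)
    have "diameter (UNIV :: (real^'n) set) = Sup (UNIV::real set)"
      by (rule unbounded_diameter) auto
    then have "cover_ok \<delta> F {UNIV}" unfolding cover_ok_def using assms elim by auto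
    then have "cover_number \<delta> F \<le> 1" using cover_number_le by fastforce
    then have "cover_number \<delta> F = 0 \<or> cover_number \<delta> F = 1" by linarith
    then show ?case by auto
  qed
  show ?thesis unfolding has_box_dim_def using tendsto_cong[OF ev] by simp
qed

context setting begin

definition "alpha m ad bd = pi_AE B (\<lambda>j. if j < m then real_vec (ad j) - real_vec (bd j) else 0)"
definition "Sset m ad bd = T \<inter> (\<lambda>x. x + alpha m ad bd) ` T"
definition "Kc = card {z::int^'n. norm (real_vec z) \<le> 2 * Mlim + 1}"

lemma Kc_pos: "0 < Kc"
proof -
  have "(0::int^'n) \<in> {z::int^'n. norm (real_vec z) \<le> 2 * Mlim + 1}" using Mlim_nonneg by (simp add: rv_0)
  then show ?thesis unfolding Kc_def using fin_ball card_gt_0_iff by blast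
qed

lemma Sset_sub: "Sset m ad bd \<subseteq> T" unfolding Sset_def by blast

lemma lower:
  assumes u0: "c ^ k < Sup (UNIV::real set)" and km: "m \<le> k"
    and ad: "\<And>j. ad j \<in> D" and bd: "\<And>j. bd j \<in> D" and Dne: "D \<noteq> {}"
  shows "card D ^ (k - m) \<le> Kc * cover_number (c ^ k) (Sset m ad bd)"
proof -
  define S where "S = Sset m ad bd"
  obtain C0 where "cover_ok (c ^ k) S C0" using cover_exists[OF Sset_sub[of m ad bd], of "c ^ k"] c0 unfolding S_def by auto
  then obtain C where C: "cover_ok (c ^ k) S C" "card C = cover_number (c ^ k) S" using cover_number_wit by blast
  have bdd: "\<forall>X\<in>C. bounded X"
  proof
    fix X assume X: "X \<in> C"
    show "bounded X"
    proof (rule ccontr)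
      assume nb: "\<not> bounded X"
      then have "X \<noteq> {}" by auto
      then have "diameter X = Sup (UNIV::real set)" using unbounded_diameter nb by blast
      moreover have "diameter X \<le> c ^ k" using C(1) X unfolding cover_ok_def by blast
      ultimately show False using u0 by simp
    qed
  qed
  obtain d0 where d0: "d0 \<in> D" using Dne by blast
  define seq where "seq v j = (if j < m then ad j else if j < k then v (j - m) else d0)" for v :: "nat \<Rightarrow> int^'n" and j
  define seq' where "seq' v j = (if j < m then bd j else seq v j)" for v j
  define V where "V = W (k - m)"
  have seqD: "seq v j \<in> D" if "v \<in> V" for v j
  proof -
    have vP: "v \<in> PiE {..<k-m} (\<lambda>_. D)" using that unfolding V_def W_def .
    have "j < k \<Longrightarrow> \<not> j < m \<Longrightarrow> v (j - m) \<in> D"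
    proof -
      assume "j < k" "\<not> j < m"
      then have "j - m \<in> {..<k-m}" by auto
      then show "v (j - m) \<in> D" using PiE_mem[OF vP] by blast
    qed
    then show ?thesis unfolding seq_def using ad d0 by auto
  qed
  have seq'D: "seq' v j \<in> D" if "v \<in> V" for v j
    unfolding seq'_def using seqD[OF that] bd by auto
  define \<phi> where "\<phi> v = pi_AE B (\<lambda>j. real_vec (seq v j))" for v
  define \<zeta> where "\<zeta> v = Zs A k (seq v)" for v
  have abnd: "norm (if j < m then real_vec (ad j) - real_vec (bd j) else 0) \<le> 2 * bD" for j
  proof -
    have "norm (real_vec (ad j) - real_vec (bd j)) \<le> norm (real_vec (ad j)) + norm (real_vec (bd j))"
      by (rule norm_triangle_ineq4)
    then show ?thesis using dig_bound[OF ad, of j] dig_bound[OF bd, of j] bD_nonneg by auto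
  qed
  have inS: "\<forall>v\<in>V. \<phi> v \<in> S"
  proof
    fix v assume v: "v \<in> V"
    have inT: "\<phi> v \<in> T" unfolding \<phi>_def using seqD[OF v] by (intro T_mem)
    have "\<phi> v - alpha m ad bd = pi_AE B (\<lambda>j. real_vec (seq v j) - (if j < m then real_vec (ad j) - real_vec (bd j) else 0))"
      unfolding \<phi>_def alpha_def
      by (rule pi_diff[of _ bD _ "2 * bD"]) (use dig_bound[OF seqD[OF v]] abnd in auto)
    also have "(\<lambda>j. real_vec (seq v j) - (if j < m then real_vec (ad j) - real_vec (bd j) else 0)) = (\<lambda>j. real_vec (seq' v j))"
      unfolding seq'_def seq_def by (rule ext) auto
    finally have "\<phi> v - alpha m ad bd \<in> T" using seq'D[OF v] T_mem by metis
    then have "\<phi> v \<in> (\<lambda>x. x + alpha m ad bd) ` T" by (metis diff_add_cancel image_eqI)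
    then show "\<phi> v \<in> S" using inT unfolding S_def Sset_def by blast
  qed
  have close: "\<forall>v\<in>V. norm (gp k (\<phi> v) - real_vec (\<zeta> v)) \<le> Mlim"
  proof
    fix v assume v: "v \<in> V"
    define t where "t = pi_AE B (\<lambda>j. real_vec (seq v (j + k)))"
    have tT: "t \<in> T" unfolding t_def using seqD[OF v] by (intro T_mem)
    have "\<phi> v = P k (seq v) + fp k t" unfolding \<phi>_def t_def by (rule T_shift) (rule seqD[OF v])
    then have "gp k (\<phi> v) = real_vec (\<zeta> v) + t" unfolding \<zeta>_def by (simp add: gp_add gp_P)
    then show "norm (gp k (\<phi> v) - real_vec (\<zeta> v)) \<le> Mlim" using T_norm[OF tT] by simp
  qed
  have inj: "inj_on \<zeta> V"
  proof (rule inj_onI)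
    fix v v' assume vv: "v \<in> V" "v' \<in> V" "\<zeta> v = \<zeta> v'"
    have eq: "seq v j = seq v' j" if "j < k" for j
      by (rule Z_inj[of k "seq v" "seq v'"]) (use vv seqD DR that in \<open>auto simp: \<zeta>_def\<close>)
    show "v = v'"
    proof (rule PiE_ext[of v "{..<k-m}" "\<lambda>_. D" v'])
      show "v \<in> PiE {..<k-m} (\<lambda>_. D)" "v' \<in> PiE {..<k-m} (\<lambda>_. D)" using vv unfolding V_def W_def by auto
      fix i assume "i \<in> {..<k-m}"
      then have i: "i + m < k" by auto
      have "seq v (i + m) = v i" "seq v' (i + m) = v' i" unfolding seq_def using i by auto
      then show "v i = v' i" using eq[OF i] by simp
    qed
  qed
  have "card V \<le> Kc * card C"
    unfolding Kc_def
    by (rule count_lemma[OF C(1) bdd _ inj inS close]) (simp add: V_def W_fin)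
  moreover have "card V = card D ^ (k - m)" unfolding V_def by (rule W_card)
  ultimately show ?thesis using C(2) unfolding S_def by simp
qed

lemma S_box:
  assumes u0: "0 < Sup (UNIV::real set)"
    and ad: "\<And>j. ad j \<in> D" and bd: "\<And>j. bd j \<in> D" and Dne: "D \<noteq> {}"
  shows "has_box_dim (Sset m ad bd) (ln (real (card D)) / (- ln c))"
proof -
  define S where "S = Sset m ad bd"
  obtain m0 where m0: "c ^ m0 < Sup (UNIV::real set)" using real_arch_pow_inv[OF u0 c1] by blast
  have a1: "1 \<le> real (card D)" using Dne D_fin by (simp add: Suc_leI card_gt_0_iff)
  have "((\<lambda>\<delta>. ln (real (cover_number \<delta> S)) / (- ln \<delta>)) \<longlongrightarrow> ln (real (card D)) / (- ln c)) (at_right 0)"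
  proof (rule box_lim[OF c0 c1 a1 _ Lc_pos, of "real Kc * real (card D) ^ m" _ "max m m0"])
    show "0 < real Kc * real (card D) ^ m" using Kc_pos a1 by simp
    show "cover_number \<delta>2 S \<le> cover_number \<delta>1 S" if dd: "0 < \<delta>1" "\<delta>1 \<le> \<delta>2" for \<delta>1 \<delta>2
    proof -
      obtain C0 where "cover_ok \<delta>1 S C0" using cover_exists[OF Sset_sub[of m ad bd] dd(1)] unfolding S_def by blast
      then show ?thesis using cover_number_mono dd(2) by blast
    qed
    show "real (card D) ^ k \<le> real Kc * real (card D) ^ m * real (cover_number (c ^ k) S)"
      if k: "max m m0 \<le> k" for k
    proof -
      have "c ^ k \<le> c ^ m0" using k c0 c1 by (intro power_decreasing) auto
      then have u: "c ^ k < Sup (UNIV::real set)" using m0 by linarith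
      have "card D ^ (k - m) \<le> Kc * cover_number (c ^ k) S"
        unfolding S_def by (rule lower[OF u _ ad bd Dne]) (use k in auto)
      then have "real (card D) ^ (k - m) \<le> real Kc * real (cover_number (c ^ k) S)"
        by (metis of_nat_le_iff of_nat_mult of_nat_power)
      then have "real (card D) ^ m * real (card D) ^ (k - m) \<le> real (card D) ^ m * (real Kc * real (cover_number (c ^ k) S))"
        using a1 by (intro mult_left_mono) auto
      moreover have "real (card D) ^ m * real (card D) ^ (k - m) = real (card D) ^ k"
        using k by (simp add: power_add[symmetric])
      ultimately show ?thesis by (simp add: algebra_simps)
    qed
    show "real (cover_number (Lc * c ^ k) S) \<le> real (card D) ^ k" for k
      using upper_bound[OF Sset_sub[of m ad bd], of k] unfolding S_def by (metis of_nat_le_iff of_nat_power)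
  qed
  then show ?thesis unfolding has_box_dim_def S_def .
qed

end


theorem mainTheorem15:
  fixes A :: "int^'n^'n" and D R :: "(int^'n) set"
  assumes "inv_similarity A"
    and "complete_residue_system A R"
    and "D \<subseteq> R"
  shows "T_AE (real_mat A) (set_minus_set (real_vec ` D) (real_vec ` D)) \<subseteq>
    closure {\<alpha> \<in> T_AE (real_mat A) (set_minus_set (real_vec ` D) (real_vec ` D)).
      \<exists>d. has_box_dim (T_AE (real_mat A) (real_vec ` D)) d \<and>
          has_box_dim (T_AE (real_mat A) (real_vec ` D) \<inter> (\<lambda>x. x + \<alpha>) ` T_AE (real_mat A) (real_vec ` D)) d}"
proof -
  obtain c where c: "0 < c" "c < 1"
    "\<forall>x y. norm (matrix_inv (real_mat A) *v x - matrix_inv (real_mat A) *v y) = c * norm (x - y)"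
    and det: "det (real_mat A) \<noteq> 0"
    using assms(1) unfolding inv_similarity_def by blast
  interpret setting A D R c
    by unfold_locales (use c det assms(2,3) in auto)
  define E2 where "E2 = set_minus_set (real_vec ` D) (real_vec ` D)"
  define T2 where "T2 = T_AE B E2"
  define Good where "Good = {\<alpha> \<in> T2. \<exists>d. has_box_dim T d \<and> has_box_dim (T \<inter> (\<lambda>x. x + \<alpha>) ` T) d}"
  have "T2 \<subseteq> closure Good"
  proof (cases "D = {}")
    case True
    then have "E2 = {}" unfolding E2_def set_minus_set_def by simp
    then have "T2 = {}" unfolding T2_def T_AE_def by simp
    then show ?thesis by simp
  next
    case Dne: False
    show ?thesis
    proof (cases "Sup (UNIV::real set) \<le> 0")
      case True
      then have "T2 \<subseteq> Good" unfolding Good_def using box_trivial[OF True] by blast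
      then show ?thesis using closure_subset by blast
    next
      case False
      then have u0: "0 < Sup (UNIV::real set)" by simp
      show ?thesis
      proof
        fix \<alpha> assume "\<alpha> \<in> T2"
        then obtain e where e: "\<alpha> = pi_AE B e" "\<forall>j. e j \<in> E2" unfolding T2_def T_AE_def by blast
        then have "\<forall>j. \<exists>p q. p \<in> D \<and> q \<in> D \<and> e j = real_vec p - real_vec q"
          unfolding E2_def set_minus_set_def by blast
        then obtain ad bd where abd: "\<And>j. ad j \<in> D" "\<And>j. bd j \<in> D" "\<And>j. e j = real_vec (ad j) - real_vec (bd j)"
          by metis
        obtain d0 where d0: "d0 \<in> D" using Dne by blast
        have ebnd: "norm (e j) \<le> 2 * bD" for j
        proof -
          have "norm (real_vec (ad j) - real_vec (bd j)) \<le> norm (real_vec (ad j)) + norm (real_vec (bd j))"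
            by (rule norm_triangle_ineq4)
          then show ?thesis using dig_bound[OF abd(1), of j] dig_bound[OF abd(2), of j] abd(3)[of j] by auto
        qed
        define trunc where "trunc m j = (if j < m then e j else 0)" for m j
        have tbnd: "norm (trunc m j) \<le> 2 * bD" for m j
          unfolding trunc_def using ebnd bD_nonneg by auto
        have alpha_eq: "alpha m ad bd = pi_AE B (trunc m)" for m
        proof -
          have "(\<lambda>j. if j < m then real_vec (ad j) - real_vec (bd j) else 0) = trunc m"
            unfolding trunc_def by (rule ext) (simp add: abd(3))
          then show ?thesis unfolding alpha_def by simp
        qed
        define dd where "dd = ln (real (card D)) / (- ln c)"
        have S0: "Sset 0 ad bd = T"
        proof -
          have "alpha 0 ad bd = 0" unfolding alpha_def by (simp add: pi_zero)
          then show ?thesis unfolding Sset_def by simp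
        qed
        have hT: "has_box_dim T dd" using S_box[where ad=ad and bd=bd and m=0, OF u0 abd(1,2) Dne] unfolding S0 dd_def .
        have good: "alpha m ad bd \<in> Good" for m
        proof -
          have "trunc m j \<in> E2" for j
          proof (cases "j < m")
            case True then show ?thesis unfolding trunc_def using e(2) by simp
          next
            case False
            have "(0::real^'n) = real_vec d0 - real_vec d0" by simp
            then show ?thesis unfolding trunc_def E2_def set_minus_set_def using False d0 by auto
          qed
          then have "alpha m ad bd \<in> T2" unfolding alpha_eq T2_def T_AE_def by blast
          moreover have "has_box_dim (T \<inter> (\<lambda>x. x + alpha m ad bd) ` T) dd"
            using S_box[where ad=ad and bd=bd and m=m, OF u0 abd(1,2) Dne] unfolding Sset_def dd_def .
          ultimately show ?thesis unfolding Good_def using hT by blast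
        qed
        have close: "norm (alpha m ad bd - \<alpha>) \<le> c ^ m * (2 * bD / (1 - c))" for m
        proof -
          define eps where "eps j = (if j < m then 0 else e j)" for j
          have epsb: "norm (eps j) \<le> 2 * bD" for j unfolding eps_def using ebnd bD_nonneg by auto
          have "\<alpha> - alpha m ad bd = pi_AE B (\<lambda>j. e j - trunc m j)"
            unfolding e(1) alpha_eq by (rule pi_diff[of _ "2 * bD" _ "2 * bD"]) (use ebnd tbnd in auto)
          also have "(\<lambda>j. e j - trunc m j) = eps" unfolding eps_def trunc_def by (rule ext) simp
          also have "pi_AE B eps = (\<Sum>j<m. fp (Suc j) (eps j)) + fp m (pi_AE B (\<lambda>j. eps (j + m)))"
            by (rule pi_shift[OF epsb])
          also have "(\<Sum>j<m. fp (Suc j) (eps j)) = 0" unfolding eps_def by simp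
          finally have "\<alpha> - alpha m ad bd = fp m (pi_AE B (\<lambda>j. eps (j + m)))" by simp
          then have "norm (alpha m ad bd - \<alpha>) = c ^ m * norm (pi_AE B (\<lambda>j. eps (j + m)))"
            by (simp add: norm_minus_commute norm_fp)
          also have "\<dots> \<le> c ^ m * (2 * bD / (1 - c))"
            using pi_norm[of "\<lambda>j. eps (j + m)" "2 * bD"] epsb c by (intro mult_left_mono) auto
          finally show ?thesis .
        qed
        have "(\<lambda>m. alpha m ad bd - \<alpha>) \<longlonglongrightarrow> 0"
        proof (rule Lim_null_comparison)
          show "\<forall>\<^sub>F m in sequentially. norm (alpha m ad bd - \<alpha>) \<le> c ^ m * (2 * bD / (1 - c))"
            using close by simp
          show "(\<lambda>m. c ^ m * (2 * bD / (1 - c))) \<longlonglongrightarrow> 0"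
            using c by (intro tendsto_mult_left_zero LIMSEQ_power_zero) auto
        qed
        then have lim: "(\<lambda>m. alpha m ad bd) \<longlonglongrightarrow> \<alpha>" by (rule LIM_zero_cancel)
        show "\<alpha> \<in> closure Good" unfolding closure_sequential
        proof (intro exI conjI)
          show "\<forall>n. alpha n ad bd \<in> Good" using good by blast
          show "(\<lambda>m. alpha m ad bd) \<longlonglongrightarrow> \<alpha>" by (rule lim)
        qed
      qed
    qed
  qed
  then show ?thesis unfolding Good_def T2_def E2_def .
qed


end
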